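(* Let $A$ be a nonnegative column-stochastic $n\times m$ matrix. If $\operatorname{rank}_+(A)\leqslant r$, then there is a polytope $P$ satisfying $\mathcal{P}_{in}(A)\subset P\subset\mathcal{P}_{out}(A)$ and $\operatorname{ic}(P)\leqslant r$.
   Context: $\operatorname{rank}_+(A)$ is the smallest $k$ such that $A$ is a sum of $k$ nonnegative rank-one matrices. A matrix is column-stochastic if each column has entries summing to $1$; so the columns of a nonnegative column-stochastic matrix lie in the standard simplex $\Delta_n=\{x\in\mathbb{R}^n: x_1+\cdots+x_n=1,\ x_i\geqslant 0\}$. $\operatorname{col}(A)$ is the linear span of the columns of $A$; $\mathcal{P}_{out}(A)=\Delta_n\cap\operatorname{col}(A)$ and $\mathcal{P}_{in}(A)$ is the convex hull of the columns of $A$. For polytopes $P\subset\mathbb{R}^d$ and $Q\subset\mathbb{R}^N$ ($N\geqslant d$), $P$ is a slice of $Q$ if $P\times\{0\}=Q\cap H$ where $H=\{x\in\mathbb{R}^N: x_{d+1}=\cdots=x_N=0\}$ (identifying $\mathbb{R}^d$ with $H$). The intersection complexity $\operatorname{ic}(P)$ is the smallest integer $k$ such that $P$ is a slice of a polytope with $k$ vertices. *)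

theory Defs
  imports Complex_Main
begin

text \<open>A point of R^N is represented as a function x :: nat => real
  with x i = 0 for all i >= N (coordinates are indexed 0..N-1).
  An n x m real matrix is a function A :: nat => nat => real, of which only the
  entries A i j with i < n and j < m are relevant.\<close>

definition euc :: "nat \<Rightarrow> (nat \<Rightarrow> real) set" where
  "euc N = {x. \<forall>i\<ge>N. x i = 0}"

definition convhull :: "(nat \<Rightarrow> real) set \<Rightarrow> (nat \<Rightarrow> real) set" where
  "convhull V = {x. \<exists>c. (\<forall>v\<in>V. 0 \<le> c v) \<and> (\<Sum>v\<in>V. c v) = 1
                        \<and> x = (\<lambda>i. \<Sum>v\<in>V. c v * v i)}"

definition polytope :: "nat \<Rightarrow> (nat \<Rightarrow> real) set \<Rightarrow> bool" where
  "polytope N Q \<longleftrightarrow> (\<exists>V. finite V \<and> V \<subseteq> euc N \<and> Q = convhull V)"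

definition vertices :: "(nat \<Rightarrow> real) set \<Rightarrow> (nat \<Rightarrow> real) set" where
  "vertices Q = {x \<in> Q. \<not> (\<exists>a\<in>Q. \<exists>b\<in>Q. a \<noteq> b \<and>
      (\<exists>t. 0 < t \<and> t < 1 \<and> x = (\<lambda>i. t * a i + (1 - t) * b i)))}"

text \<open>P (in R^d) is a slice of Q (in R^N, N >= d): P x {0} = Q \<inter> H, where
  H = {x in R^N. x_(d+1) = ... = x_N = 0}.\<close>
definition is_slice :: "nat \<Rightarrow> (nat \<Rightarrow> real) set \<Rightarrow> nat \<Rightarrow> (nat \<Rightarrow> real) set \<Rightarrow> bool" where
  "is_slice d P N Q \<longleftrightarrow> d \<le> N \<and> P = Q \<inter> {x \<in> euc N. \<forall>i. d \<le> i \<and> i < N \<longrightarrow> x i = 0}"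

definition ic :: "nat \<Rightarrow> (nat \<Rightarrow> real) set \<Rightarrow> nat" where
  "ic d P = (LEAST k. \<exists>N Q. polytope N Q \<and> card (vertices Q) = k \<and> is_slice d P N Q)"

definition nonneg_mat :: "nat \<Rightarrow> nat \<Rightarrow> (nat \<Rightarrow> nat \<Rightarrow> real) \<Rightarrow> bool" where
  "nonneg_mat n m A \<longleftrightarrow> (\<forall>i<n. \<forall>j<m. 0 \<le> A i j)"

definition col_stochastic :: "nat \<Rightarrow> nat \<Rightarrow> (nat \<Rightarrow> nat \<Rightarrow> real) \<Rightarrow> bool" where
  "col_stochastic n m A \<longleftrightarrow> (\<forall>j<m. (\<Sum>i<n. A i j) = 1)"

definition rank_one :: "nat \<Rightarrow> nat \<Rightarrow> (nat \<Rightarrow> nat \<Rightarrow> real) \<Rightarrow> bool" where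
  "rank_one n m B \<longleftrightarrow> (\<exists>u v. (\<exists>i<n. u i \<noteq> 0) \<and> (\<exists>j<m. v j \<noteq> 0)
                          \<and> (\<forall>i<n. \<forall>j<m. B i j = u i * v j))"

definition nnrank :: "nat \<Rightarrow> nat \<Rightarrow> (nat \<Rightarrow> nat \<Rightarrow> real) \<Rightarrow> nat" where
  "nnrank n m A = (LEAST k. \<exists>B :: nat \<Rightarrow> nat \<Rightarrow> nat \<Rightarrow> real.
      (\<forall>l<k. nonneg_mat n m (B l) \<and> rank_one n m (B l))
      \<and> (\<forall>i<n. \<forall>j<m. A i j = (\<Sum>l<k. B l i j)))"

definition column :: "nat \<Rightarrow> (nat \<Rightarrow> nat \<Rightarrow> real) \<Rightarrow> nat \<Rightarrow> (nat \<Rightarrow> real)" where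
  "column n A j = (\<lambda>i. if i < n then A i j else 0)"

definition simplex :: "nat \<Rightarrow> (nat \<Rightarrow> real) set" where
  "simplex n = {x \<in> euc n. (\<forall>i<n. 0 \<le> x i) \<and> (\<Sum>i<n. x i) = 1}"

definition colspace :: "nat \<Rightarrow> nat \<Rightarrow> (nat \<Rightarrow> nat \<Rightarrow> real) \<Rightarrow> (nat \<Rightarrow> real) set" where
  "colspace n m A = {x. \<exists>c. x = (\<lambda>i. \<Sum>j<m. c j * column n A j i)}"

definition P_out :: "nat \<Rightarrow> nat \<Rightarrow> (nat \<Rightarrow> nat \<Rightarrow> real) \<Rightarrow> (nat \<Rightarrow> real) set" where
  "P_out n m A = simplex n \<inter> colspace n m A"

definition P_in :: "nat \<Rightarrow> nat \<Rightarrow> (nat \<Rightarrow> nat \<Rightarrow> real) \<Rightarrow> (nat \<Rightarrow> real) set" where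
  "P_in n m A = convhull (column n A ` {..<m})"

end

theory Submission
  imports Defs
begin


definition cvx :: "(nat \<Rightarrow> real) set \<Rightarrow> bool" where
  "cvx C \<longleftrightarrow> (\<forall>x\<in>C. \<forall>y\<in>C. \<forall>t. 0 \<le> t \<and> t \<le> 1 \<longrightarrow> (\<lambda>i. t * x i + (1-t) * y i) \<in> C)"

lemma cvx_sum:
  assumes "cvx C" "finite I"
  shows "(\<forall>l\<in>I. 0 \<le> a l) \<Longrightarrow> sum a I = 1 \<Longrightarrow> (\<forall>l\<in>I. f l \<in> C)
     \<Longrightarrow> (\<lambda>i. \<Sum>l\<in>I. a l * f l i) \<in> C"
  using assms(2)
proof (induction I arbitrary: a rule: finite_induct)
  case empty
  then show ?case by simp
next
  case (insert x I)
  have ax: "0 \<le> a x" "f x \<in> C" using insert by auto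
  show ?case
  proof (cases "a x = 1")
    case True
    have "sum a I = 0" using insert True by simp
    then have z: "\<forall>l\<in>I. a l = 0" using insert by (simp add: sum_nonneg_eq_0_iff)
    have "(\<lambda>i. \<Sum>l\<in>insert x I. a l * f l i) = f x"
      using insert True z by auto
    then show ?thesis using ax by simp
  next
    case False
    define s where "s = sum a I"
    have s: "s = 1 - a x" using insert s_def by simp
    have "0 \<le> sum a I" using insert by (intro sum_nonneg) auto
    then have "a x \<le> 1" using insert by simp
    then have sp: "s > 0" using False s by simp
    have p: "(\<lambda>i. \<Sum>l\<in>I. (a l / s) * f l i) \<in> C"
      apply (rule insert.IH)
      using insert sp by (auto simp: s_def sum_divide_distrib[symmetric])
    have eq: "(\<lambda>i. \<Sum>l\<in>insert x I. a l * f l i)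
       = (\<lambda>i. a x * f x i + (1 - a x) * (\<Sum>l\<in>I. (a l / s) * f l i))"
      using insert sp s by (auto simp: sum_distrib_left)
    show ?thesis unfolding eq using assms(1) p ax \<open>a x \<le> 1\<close> unfolding cvx_def by auto
  qed
qed

lemma convhull_subset:
  assumes "cvx C" "finite V" "V \<subseteq> C"
  shows "convhull V \<subseteq> C"
proof
  fix x assume "x \<in> convhull V"
  then obtain c where c: "\<forall>v\<in>V. 0 \<le> c v" "(\<Sum>v\<in>V. c v) = 1" "x = (\<lambda>i. \<Sum>v\<in>V. c v * v i)"
    unfolding convhull_def by auto
  show "x \<in> C" unfolding c(3) by (rule cvx_sum[OF assms(1,2)]) (use c assms(3) in auto)
qed

lemma cvx_convhull: "cvx (convhull V)"
  unfolding cvx_def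
proof (intro ballI allI impI)
  fix x y and t :: real assume x: "x \<in> convhull V" and y: "y \<in> convhull V" and t: "0 \<le> t \<and> t \<le> 1"
  obtain c where c: "\<forall>v\<in>V. 0 \<le> c v" "(\<Sum>v\<in>V. c v) = 1" "x = (\<lambda>i. \<Sum>v\<in>V. c v * v i)"
    using x unfolding convhull_def by auto
  obtain d where d: "\<forall>v\<in>V. 0 \<le> d v" "(\<Sum>v\<in>V. d v) = 1" "y = (\<lambda>i. \<Sum>v\<in>V. d v * v i)"
    using y unfolding convhull_def by auto
  show "(\<lambda>i. t * x i + (1 - t) * y i) \<in> convhull V"
    unfolding convhull_def
  proof (intro CollectI exI[of _ "\<lambda>v. t * c v + (1-t) * d v"] conjI)
    show "\<forall>v\<in>V. 0 \<le> t * c v + (1 - t) * d v" using c d t by auto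
    show "(\<Sum>v\<in>V. t * c v + (1 - t) * d v) = 1"
      using c d by (simp add: sum.distrib sum_distrib_left[symmetric])
    show "(\<lambda>i. t * x i + (1 - t) * y i) = (\<lambda>i. \<Sum>v\<in>V. (t * c v + (1 - t) * d v) * v i)"
      using c d by (auto simp: sum.distrib[symmetric] sum_distrib_left intro!: sum.cong simp: algebra_simps)
  qed
qed

lemma convhull_sup: "finite V \<Longrightarrow> V \<subseteq> convhull V"
proof
  fix x assume "finite V" "x \<in> V"
  then show "x \<in> convhull V" unfolding convhull_def
    by (intro CollectI exI[of _ "\<lambda>v. if v = x then 1 else 0"]) (auto simp: if_distrib[of "\<lambda>c. c * _"] cong: if_cong)
qed

lemma vertices_convhull:
  assumes "finite V" shows "vertices (convhull V) \<subseteq> V"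
proof
  fix x assume xv: "x \<in> vertices (convhull V)"
  then have xc: "x \<in> convhull V" unfolding vertices_def by auto
  show "x \<in> V"
  proof (rule ccontr)
    assume nx: "x \<notin> V"
    obtain c where c: "\<forall>v\<in>V. 0 \<le> c v" "(\<Sum>v\<in>V. c v) = 1" "x = (\<lambda>i. \<Sum>v\<in>V. c v * v i)"
      using xc unfolding convhull_def by auto
    obtain v0 where v0: "v0 \<in> V" "c v0 > 0"
    proof (rule ccontr)
      assume "\<not> thesis"
      with that have "\<forall>v\<in>V. c v = 0" using c(1) by force
      then show False using c(2) by simp
    qed
    have rest: "(\<Sum>v\<in>V-{v0}. c v) = 1 - c v0" using c(2) v0 assms
      by (simp add: sum_diff1)
    have ne1: "c v0 \<noteq> 1"
    proof
      assume h: "c v0 = 1"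
      then have "\<forall>v\<in>V-{v0}. c v = 0" using rest c(1) assms
        sum_nonneg_eq_0_iff[of "V-{v0}" c] by simp
      then have "x = v0" unfolding c(3) using v0 assms h
        by (auto simp: sum.remove[OF assms v0(1)])
      then show False using nx v0 by simp
    qed
    have lt: "c v0 < 1" using ne1 rest c(1) assms
      by (smt (verit, ccfv_SIG) DiffD1 sum_nonneg)
    define x' where "x' = (\<lambda>i. \<Sum>v\<in>V. (if v = v0 then 0 else c v / (1 - c v0)) * v i)"
    have x'c: "x' \<in> convhull V" unfolding convhull_def x'_def
    proof (intro CollectI exI[of _ "\<lambda>v. if v = v0 then 0 else c v / (1 - c v0)"] conjI)
      show "\<forall>v\<in>V. 0 \<le> (if v = v0 then 0 else c v / (1 - c v0))" using c(1) lt by auto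
      have "(\<Sum>v\<in>V. (if v = v0 then 0 else c v / (1 - c v0))) = (\<Sum>v\<in>V-{v0}. c v / (1 - c v0))"
        using assms v0 by (simp add: sum.remove sum.If_cases Diff_eq Int_commute)
      also have "\<dots> = 1" using rest lt by (simp add: sum_divide_distrib[symmetric])
      finally show "(\<Sum>v\<in>V. (if v = v0 then 0 else c v / (1 - c v0))) = 1" .
    qed simp
    have eqx: "x = (\<lambda>i. c v0 * v0 i + (1 - c v0) * x' i)"
    proof
      fix i
      have "x i = c v0 * v0 i + (\<Sum>v\<in>V-{v0}. c v * v i)" unfolding c(3)
        using assms v0 by (simp add: sum.remove)
      moreover have "(1 - c v0) * x' i = (\<Sum>v\<in>V-{v0}. c v * v i)"
        unfolding x'_def using assms v0 lt
        by (simp add: sum.remove sum_distrib_left)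
      ultimately show "x i = c v0 * v0 i + (1 - c v0) * x' i" by simp
    qed
    have "v0 \<noteq> x'"
    proof
      assume "v0 = x'"
      then have "x = v0" unfolding eqx by (auto simp: algebra_simps)
      then show False using nx v0 by simp
    qed
    moreover have "v0 \<in> convhull V" using convhull_sup[OF assms] v0 by auto
    ultimately show False using xv x'c eqx v0 lt unfolding vertices_def by blast
  qed
qed




definition dotk :: "nat \<Rightarrow> (nat \<Rightarrow> real) \<Rightarrow> (nat \<Rightarrow> real) \<Rightarrow> real" where
  "dotk k w y = (\<Sum>l<k. w l * y l)"

lemma dotk_lin2: "dotk k w (\<lambda>l. a l + c * b l) = dotk k w a + c * dotk k w b"
  by (simp add: dotk_def algebra_simps sum.distrib sum_distrib_left)

lemma dotk_lin1: "dotk k (\<lambda>l. w l - c * w1 l) y = dotk k w y - c * dotk k w1 y"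
  by (simp add: dotk_def algebra_simps sum_subtractf sum_distrib_left)

lemma euc_zero: "y \<in> euc k \<Longrightarrow> (\<forall>i<k. y i = 0) \<Longrightarrow> y = (\<lambda>l. 0)"
  unfolding euc_def by (auto simp: not_less[symmetric])

lemma span_euc: "\<forall>j. vc j \<in> euc k \<Longrightarrow> (\<lambda>l. \<Sum>j<m. c j * vc j l) \<in> euc k"
  unfolding euc_def by auto

lemma kernel_exists:
  fixes m :: nat
  assumes vc: "\<forall>j. vc j \<in> euc k"
  shows "\<exists>ws. \<forall>y\<in>euc k. (\<forall>w\<in>set ws. dotk k w y = 0) \<longleftrightarrow>
            (\<exists>c. y = (\<lambda>l. \<Sum>j<m. c j * vc j l))"
proof (induction m)
  case 0
  show ?case
  proof (intro exI[of _ "map (\<lambda>i. \<lambda>l. if l = i then 1 else 0) [0..<k]"] ballI)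
    fix y assume y: "y \<in> euc k"
    have d: "i < k \<Longrightarrow> dotk k (\<lambda>l. if l = i then 1 else 0) y = y i" for i
      by (simp add: dotk_def if_distrib[of "\<lambda>c. c * _"] cong: if_cong)
    have "(\<forall>w\<in>set (map (\<lambda>i. \<lambda>l. if l = i then 1 else 0) [0..<k]). dotk k w y = 0)
       \<longleftrightarrow> (\<forall>i<k. y i = 0)" using d by auto
    also have "\<dots> \<longleftrightarrow> y = (\<lambda>l. 0)" using euc_zero[OF y] by auto
    finally show "(\<forall>w\<in>set (map (\<lambda>i. \<lambda>l. if l = i then 1 else 0) [0..<k]). dotk k w y = 0) =
       (\<exists>c. y = (\<lambda>l. \<Sum>j<0. c j * vc j l))" by simp
  qed
next
  case (Suc m)
  then obtain ws where ws: "\<forall>y\<in>euc k. (\<forall>w\<in>set ws. dotk k w y = 0) \<longleftrightarrow>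
            (\<exists>c. y = (\<lambda>l. \<Sum>j<m. c j * vc j l))" by blast
  define v where "v = vc m"
  have v: "v \<in> euc k" using vc v_def by simp
  have splitS: "(\<lambda>l. \<Sum>j<Suc m. c j * vc j l) = (\<lambda>l. (\<Sum>j<m. c j * vc j l) + c m * v l)" for c
    by (simp add: v_def)
  have spanS: "(\<exists>c. y = (\<lambda>l. \<Sum>j<Suc m. c j * vc j l)) \<longleftrightarrow>
     (\<exists>a g. (\<exists>c. a = (\<lambda>l. \<Sum>j<m. c j * vc j l)) \<and> y = (\<lambda>l. a l + g * v l))" for y
  proof
    assume "\<exists>c. y = (\<lambda>l. \<Sum>j<Suc m. c j * vc j l)"
    then show "\<exists>a g. (\<exists>c. a = (\<lambda>l. \<Sum>j<m. c j * vc j l)) \<and> y = (\<lambda>l. a l + g * v l)"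
      using splitS by blast
  next
    assume "\<exists>a g. (\<exists>c. a = (\<lambda>l. \<Sum>j<m. c j * vc j l)) \<and> y = (\<lambda>l. a l + g * v l)"
    then obtain c g where y: "y = (\<lambda>l. (\<Sum>j<m. c j * vc j l) + g * v l)" by blast
    have "y = (\<lambda>l. \<Sum>j<Suc m. (c(m := g)) j * vc j l)"
      unfolding splitS y by simp
    then show "\<exists>c. y = (\<lambda>l. \<Sum>j<Suc m. c j * vc j l)" by blast
  qed
  show ?case
  proof (cases "\<forall>w\<in>set ws. dotk k w v = 0")
    case True
    show ?thesis
    proof (intro exI[of _ ws] ballI)
      fix y assume y: "y \<in> euc k"
      show "(\<forall>w\<in>set ws. dotk k w y = 0) = (\<exists>c. y = (\<lambda>l. \<Sum>j<Suc m. c j * vc j l))"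
        unfolding spanS
      proof
        assume "\<forall>w\<in>set ws. dotk k w y = 0"
        then have "\<exists>c. y = (\<lambda>l. \<Sum>j<m. c j * vc j l)" using ws y by blast
        then show "\<exists>a g. (\<exists>c. a = (\<lambda>l. \<Sum>j<m. c j * vc j l)) \<and> y = (\<lambda>l. a l + g * v l)"
          by (intro exI[of _ y] exI[of _ 0]) auto
      next
        assume "\<exists>a g. (\<exists>c. a = (\<lambda>l. \<Sum>j<m. c j * vc j l)) \<and> y = (\<lambda>l. a l + g * v l)"
        then obtain a g c where a: "a = (\<lambda>l. \<Sum>j<m. c j * vc j l)" and yy: "y = (\<lambda>l. a l + g * v l)"
          by blast
        have "a \<in> euc k" using a span_euc[OF vc] by simp
        then have "\<forall>w\<in>set ws. dotk k w a = 0" using ws a by blast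
        then show "\<forall>w\<in>set ws. dotk k w y = 0" using True unfolding yy dotk_lin2 by simp
      qed
    qed
  next
    case False
    then obtain w1 where w1: "w1 \<in> set ws" "dotk k w1 v \<noteq> 0" by blast
    define ws' where "ws' = map (\<lambda>w. \<lambda>l. w l - (dotk k w v / dotk k w1 v) * w1 l) ws"
    show ?thesis
    proof (intro exI[of _ ws'] ballI)
      fix y assume y: "y \<in> euc k"
      have d': "(\<forall>w'\<in>set ws'. dotk k w' y = 0) \<longleftrightarrow>
          (\<forall>w\<in>set ws. dotk k w y - (dotk k w v / dotk k w1 v) * dotk k w1 y = 0)"
        unfolding ws'_def by (simp only: set_map ball_simps dotk_lin1)
      show "(\<forall>w\<in>set ws'. dotk k w y = 0) = (\<exists>c. y = (\<lambda>l. \<Sum>j<Suc m. c j * vc j l))"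
        unfolding spanS d'
      proof
        assume h: "\<forall>w\<in>set ws. dotk k w y - dotk k w v / dotk k w1 v * dotk k w1 y = 0"
        define g where "g = dotk k w1 y / dotk k w1 v"
        define y' where "y' = (\<lambda>l. y l + (- g) * v l)"
        have y'e: "y' \<in> euc k" using y v unfolding y'_def euc_def by auto
        have "\<forall>w\<in>set ws. dotk k w y' = 0"
        proof
          fix w assume "w \<in> set ws"
          then have "dotk k w y = dotk k w v / dotk k w1 v * dotk k w1 y" using h by auto
          then show "dotk k w y' = 0" unfolding y'_def dotk_lin2 g_def by simp
        qed
        then have "\<exists>c. y' = (\<lambda>l. \<Sum>j<m. c j * vc j l)" using ws y'e by blast
        moreover have "y = (\<lambda>l. y' l + g * v l)" unfolding y'_def by simp
        ultimately show "\<exists>a g. (\<exists>c. a = (\<lambda>l. \<Sum>j<m. c j * vc j l)) \<and> y = (\<lambda>l. a l + g * v l)"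
          by blast
      next
        assume "\<exists>a g. (\<exists>c. a = (\<lambda>l. \<Sum>j<m. c j * vc j l)) \<and> y = (\<lambda>l. a l + g * v l)"
        then obtain a g c where a: "a = (\<lambda>l. \<Sum>j<m. c j * vc j l)" and yy: "y = (\<lambda>l. a l + g * v l)"
          by blast
        have "a \<in> euc k" using a span_euc[OF vc] by simp
        then have a0: "\<forall>w\<in>set ws. dotk k w a = 0" using ws a by blast
        show "\<forall>w\<in>set ws. dotk k w y - dotk k w v / dotk k w1 v * dotk k w1 y = 0"
          using a0 w1 unfolding yy dotk_lin2 by auto
      qed
    qed
  qed
qed




definition Fset :: "nat \<Rightarrow> (nat \<Rightarrow> real) set \<Rightarrow> (nat \<Rightarrow> real) set" where
  "Fset k G = {y\<in>euc k. (\<forall>l<k. 0 \<le> y l) \<and> (\<Sum>l<k. y l) = 1 \<and> (\<forall>g\<in>G. dotk k g y = 0)}"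

definition Bset :: "nat \<Rightarrow> (nat \<Rightarrow> real) set \<Rightarrow> (nat \<Rightarrow> real) set" where
  "Bset k G = {y\<in>Fset k G. \<forall>z\<in>euc k. (\<forall>l<k. y l = 0 \<longrightarrow> z l = 0) \<and> (\<Sum>l<k. z l) = 0
        \<and> (\<forall>g\<in>G. dotk k g z = 0) \<longrightarrow> z = (\<lambda>l. 0)}"

lemma finite_Bset: "finite (Bset k G)"
proof (rule inj_on_finite[of "\<lambda>y. {l. l<k \<and> y l \<noteq> 0}" _ "Pow {..<k}"])
  show "inj_on (\<lambda>y. {l. l < k \<and> y l \<noteq> 0}) (Bset k G)"
  proof (rule inj_onI)
    fix y y' assume y: "y \<in> Bset k G" and y': "y' \<in> Bset k G"
      and eq: "{l. l < k \<and> y l \<noteq> 0} = {l. l < k \<and> y' l \<noteq> 0}"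
    define z where "z = (\<lambda>l. y l + (-1) * y' l)"
    have ye: "y \<in> euc k" "y' \<in> euc k" using y y' unfolding Bset_def Fset_def by auto
    have ze: "z \<in> euc k" using ye unfolding z_def euc_def by auto
    have z1: "\<forall>l<k. y l = 0 \<longrightarrow> z l = 0"
    proof (intro allI impI)
      fix l assume l: "l < k" "y l = 0"
      then have "l \<notin> {l. l < k \<and> y' l \<noteq> 0}" unfolding eq[symmetric] by simp
      then show "z l = 0" using l unfolding z_def by simp
    qed
    have z2: "(\<Sum>l<k. z l) = 0" using y y' unfolding z_def Bset_def Fset_def
      by (simp add: sum_subtractf)
    have z3: "\<forall>g\<in>G. dotk k g z = 0" using y y' unfolding z_def Bset_def Fset_def dotk_lin2 by simp
    have "\<forall>z\<in>euc k. (\<forall>l<k. y l = 0 \<longrightarrow> z l = 0) \<and> (\<Sum>l<k. z l) = 0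
        \<and> (\<forall>g\<in>G. dotk k g z = 0) \<longrightarrow> z = (\<lambda>l. 0)" using y unfolding Bset_def by simp
    then have "z = (\<lambda>l. 0)" using ze z1 z2 z3 by simp
    then show "y = y'" unfolding z_def by (auto simp: fun_eq_iff)
  qed
next
  show "(\<lambda>y. {l. l < k \<and> y l \<noteq> 0}) ` Bset k G \<subseteq> Pow {..<k}" by auto
qed simp

lemma lp_step:
  assumes y: "y \<in> Fset k G" and ze: "z \<in> euc k" and z1: "\<forall>l<k. y l = 0 \<longrightarrow> z l = 0"
    and z2: "(\<Sum>l<k. z l) = 0" and z3: "\<forall>g\<in>G. dotk k g z = 0" and p: "p < k" "z p > 0"
  shows "\<exists>t>0. (\<lambda>l. y l + (-t) * z l) \<in> Fset k G \<and>
     card {l. l<k \<and> y l + (-t) * z l \<noteq> 0} < card {l. l<k \<and> y l \<noteq> 0}"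
proof -
  define S where "S = {l. l<k \<and> z l > 0}"
  have Sf: "finite S" and Sne: "S \<noteq> {}" using p unfolding S_def by auto
  define t where "t = Min ((\<lambda>l. y l / z l) ` S)"
  have "t \<in> (\<lambda>l. y l / z l) ` S" unfolding t_def using Sf Sne by (intro Min_in) auto
  then obtain l1 where l1: "l1 \<in> S" "t = y l1 / z l1" by blast
  have tle: "l \<in> S \<Longrightarrow> t \<le> y l / z l" for l unfolding t_def using Sf by (intro Min_le) auto
  have ypos: "l \<in> S \<Longrightarrow> y l > 0" for l using y z1 unfolding S_def Fset_def
    by (auto simp: less_le)
  have tpos: "t > 0" using l1 ypos[OF l1(1)] S_def by auto
  define y' where "y' = (\<lambda>l. y l + (-t) * z l)"
  have ye: "y \<in> euc k" using y unfolding Fset_def by auto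
  have "y' \<in> Fset k G" unfolding Fset_def
  proof (intro CollectI conjI allI impI ballI)
    show "y' \<in> euc k" using ye ze unfolding y'_def euc_def by auto
    fix l assume l: "l < k"
    show "0 \<le> y' l"
    proof (cases "z l > 0")
      case True
      then have "t \<le> y l / z l" using tle l S_def by auto
      then have "t * z l \<le> y l" using True by (simp add: pos_le_divide_eq)
      then show ?thesis unfolding y'_def by simp
    next
      case False
      then have "t * z l \<le> 0" using tpos by (simp add: mult_nonneg_nonpos)
      then show ?thesis unfolding y'_def using y l unfolding Fset_def by auto
    qed
  next
    show "(\<Sum>l<k. y' l) = 1" using y z2 unfolding y'_def Fset_def
      by (simp add: sum_subtractf sum_distrib_left[symmetric])
  next
    fix g assume "g \<in> G"
    then show "dotk k g y' = 0" using y z3 unfolding y'_def dotk_lin2 Fset_def by simp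
  qed
  moreover have "card {l. l<k \<and> y' l \<noteq> 0} < card {l. l<k \<and> y l \<noteq> 0}"
  proof (rule psubset_card_mono)
    show "finite {l. l < k \<and> y l \<noteq> 0}" by simp
    have "y' l1 = 0" using l1 S_def unfolding y'_def by auto
    moreover have "y l1 \<noteq> 0" "l1 < k" using ypos[OF l1(1)] l1 S_def by auto
    moreover have "{l. l < k \<and> y' l \<noteq> 0} \<subseteq> {l. l < k \<and> y l \<noteq> 0}"
      using z1 unfolding y'_def by auto
    ultimately show "{l. l < k \<and> y' l \<noteq> 0} \<subset> {l. l < k \<and> y l \<noteq> 0}" by blast
  qed
  ultimately show ?thesis using tpos unfolding y'_def by blast
qed

lemma lp_main:
  assumes C: "cvx C" and B: "\<phi> ` Bset k G \<subseteq> C"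
    and lin: "\<And>a b t. \<phi> (\<lambda>l. t * a l + (1-t) * b l) = (\<lambda>i. t * \<phi> a i + (1-t) * \<phi> b i)"
  shows "y \<in> Fset k G \<Longrightarrow> \<phi> y \<in> C"
proof (induction "card {l. l<k \<and> y l \<noteq> 0}" arbitrary: y rule: less_induct)
  case less
  show ?case
  proof (cases "y \<in> Bset k G")
    case True then show ?thesis using B by auto
  next
    case False
    then obtain z where ze: "z \<in> euc k" and z1: "\<forall>l<k. y l = 0 \<longrightarrow> z l = 0"
      and z2: "(\<Sum>l<k. z l) = 0" and z3: "\<forall>g\<in>G. dotk k g z = 0" and zn: "z \<noteq> (\<lambda>l. 0)"
      using less.prems False unfolding Bset_def by auto
    have "\<exists>p<k. z p > 0"
    proof (rule ccontr)
      assume "\<not> ?thesis"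
      then have "\<forall>l<k. z l \<le> 0" by auto
      then have "\<forall>l<k. - z l = 0" using z2 sum_nonneg_eq_0_iff[of "{..<k}" "\<lambda>l. - z l"] by (auto simp: sum_negf)
      then have "z = (\<lambda>l. 0)" using euc_zero[OF ze] by simp
      then show False using zn by simp
    qed
    then obtain p where p: "p < k" "z p > 0" by blast
    have "\<exists>q<k. z q < 0"
    proof (rule ccontr)
      assume "\<not> ?thesis"
      then have "\<forall>l<k. z l \<ge> 0" by auto
      then have "\<forall>l<k. z l = 0" using z2 sum_nonneg_eq_0_iff[of "{..<k}" z] by auto
      then have "z = (\<lambda>l. 0)" using euc_zero[OF ze] by simp
      then show False using zn by simp
    qed
    then obtain q where q: "q < k" "(\<lambda>l. - z l) q > 0" by auto
    obtain t1 where t1: "t1 > 0" "(\<lambda>l. y l + (-t1) * z l) \<in> Fset k G"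
      "card {l. l<k \<and> y l + (-t1) * z l \<noteq> 0} < card {l. l<k \<and> y l \<noteq> 0}"
      using lp_step[OF less.prems ze z1 z2 z3 p] by blast
    have mz: "(\<lambda>l. - z l) \<in> euc k" "\<forall>l<k. y l = 0 \<longrightarrow> (\<lambda>l. - z l) l = 0"
      "(\<Sum>l<k. (\<lambda>l. - z l) l) = 0" "\<forall>g\<in>G. dotk k g (\<lambda>l. - z l) = 0"
      using ze z1 z2 z3 by (auto simp: euc_def sum_negf dotk_def)
    obtain t2 where t2: "t2 > 0" "(\<lambda>l. y l + (-t2) * (- z l)) \<in> Fset k G"
      "card {l. l<k \<and> y l + (-t2) * (- z l) \<noteq> 0} < card {l. l<k \<and> y l \<noteq> 0}"
      using lp_step[OF less.prems mz q] by blast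
    have h1: "\<phi> (\<lambda>l. y l + (-t1) * z l) \<in> C" using less.hyps[OF t1(3) t1(2)] .
    have h2: "\<phi> (\<lambda>l. y l + (-t2) * (- z l)) \<in> C" using less.hyps[OF t2(3) t2(2)] .
    define s where "s = t2 / (t1 + t2)"
    have s01: "0 \<le> s" "s \<le> 1" using t1 t2 unfolding s_def by auto
    have yeq: "y = (\<lambda>l. s * (y l + (-t1) * z l) + (1 - s) * (y l + (-t2) * (- z l)))"
    proof
      fix l
      have ne: "t1 + t2 \<noteq> 0" using t1 t2 by simp
      have "s * (y l + (-t1) * z l) + (1 - s) * (y l + (-t2) * (- z l))
          = y l + z l * ((1 - s) * t2 - s * t1)" by (simp add: algebra_simps)
      also have "(1 - s) * t2 - s * t1 = 0" unfolding s_def using ne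
        by (simp add: field_simps)
      finally show "y l = s * (y l + (-t1) * z l) + (1 - s) * (y l + (-t2) * (- z l))" by simp
    qed
    have "\<phi> y = \<phi> (\<lambda>l. s * (y l + (-t1) * z l) + (1 - s) * (y l + (-t2) * (- z l)))"
      by (rule arg_cong[where f=\<phi>]) (rule yeq)
    also have "\<dots> = (\<lambda>i. s * \<phi> (\<lambda>l. y l + (-t1) * z l) i + (1 - s) * \<phi> (\<lambda>l. y l + (-t2) * (- z l)) i)"
      by (rule lin)
    finally have "\<phi> y = (\<lambda>i. s * \<phi> (\<lambda>l. y l + (-t1) * z l) i + (1 - s) * \<phi> (\<lambda>l. y l + (-t2) * (- z l)) i)" .
    then show ?thesis using C h1 h2 s01 unfolding cvx_def by auto
  qed
qed




lemma decomp_exists: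
  assumes A: "nonneg_mat n m A"
  shows "\<exists>(k::nat) B. (\<forall>l<k. nonneg_mat n m (B l) \<and> rank_one n m (B l))
      \<and> (\<forall>i<n. \<forall>j<m. A i j = (\<Sum>l<k. B l i j))"
proof -
  have "\<exists>(k::nat) B. (\<forall>l<k. nonneg_mat n m (B l) \<and> rank_one n m (B l))
      \<and> (\<forall>i<n. \<forall>j<m. (if j < m' then A i j else 0) = (\<Sum>l<k. B l i j))" for m'
  proof (induction m')
    case 0
    show ?case by (rule exI[of _ "0::nat"]) simp
  next
    case (Suc m')
    then obtain k :: nat and B where B: "\<forall>l<k. nonneg_mat n m (B l) \<and> rank_one n m (B l)"
      "\<forall>i<n. \<forall>j<m. (if j < m' then A i j else 0) = (\<Sum>l<k. B l i j)" by blast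
    show ?case
    proof (cases "m' < m \<and> (\<exists>i<n. A i m' \<noteq> 0)")
      case True
      define B' where "B' = B(k := (\<lambda>i j. if j = m' then A i m' else 0))"
      show ?thesis
      proof (intro exI[of _ "Suc k"] exI[of _ B'] conjI allI impI)
        fix l assume l: "l < Suc k"
        show "nonneg_mat n m (B' l)"
          using B(1) A l unfolding B'_def nonneg_mat_def by (auto simp: less_Suc_eq)
        show "rank_one n m (B' l)"
        proof (cases "l = k")
          case True
          show ?thesis unfolding rank_one_def B'_def True
            by (intro exI[of _ "\<lambda>i. A i m'"] exI[of _ "\<lambda>j. if j = m' then 1 else 0"])
               (use \<open>m' < m \<and> (\<exists>i<n. A i m' \<noteq> 0)\<close> in auto)
        next
          case False
          then show ?thesis using B(1) l unfolding B'_def by auto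
        qed
      next
        fix i j assume i: "i < n" and j: "j < m"
        have eq: "(\<Sum>l<Suc k. B' l i j) = (\<Sum>l<k. B l i j) + (if j = m' then A i m' else 0)"
          unfolding B'_def by simp
        have h: "(if j < m' then A i j else 0) = (\<Sum>l<k. B l i j)" using B(2) i j by blast
        show "(if j < Suc m' then A i j else 0) = (\<Sum>l<Suc k. B' l i j)"
          unfolding eq h[symmetric] by (auto simp: less_Suc_eq)
      qed
    next
      case False
      show ?thesis
      proof (intro exI[of _ k] exI[of _ B] conjI allI impI)
        show "\<And>l. l < k \<Longrightarrow> nonneg_mat n m (B l)" "\<And>l. l < k \<Longrightarrow> rank_one n m (B l)"
          using B(1) by auto
        fix i j assume i: "i < n" and j: "j < m"
        have h: "(if j < m' then A i j else 0) = (\<Sum>l<k. B l i j)" using B(2) i j by blast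
        show "(if j < Suc m' then A i j else 0) = (\<Sum>l<k. B l i j)"
          unfolding h[symmetric] using i j False by (auto simp: less_Suc_eq)
      qed
    qed
  qed
  from this[of m] show ?thesis by auto
qed

lemma dotk_comb: "dotk k w (\<lambda>l. t * a l + (1-t) * b l) = t * dotk k w a + (1-t) * dotk k w b"
proof -
  have "dotk k w (\<lambda>l. t * a l + (1-t) * b l) = (\<Sum>l<k. t * (w l * a l) + (1-t) * (w l * b l))"
    unfolding dotk_def by (intro sum.cong) (auto simp: algebra_simps)
  then show ?thesis by (simp add: sum.distrib sum_distrib_left dotk_def)
qed

lemma cvx_Fset: "cvx (Fset k G)"
  unfolding cvx_def Fset_def
proof (intro ballI allI impI CollectI conjI)
  fix x y and t :: real
  assume x: "x \<in> {y \<in> euc k. (\<forall>l<k. 0 \<le> y l) \<and> sum y {..<k} = 1 \<and> (\<forall>g\<in>G. dotk k g y = 0)}"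
    and y: "y \<in> {y \<in> euc k. (\<forall>l<k. 0 \<le> y l) \<and> sum y {..<k} = 1 \<and> (\<forall>g\<in>G. dotk k g y = 0)}"
    and t: "0 \<le> t \<and> t \<le> 1"
  show "(\<lambda>i. t * x i + (1 - t) * y i) \<in> euc k" using x y unfolding euc_def by auto
  show "\<And>l. l < k \<Longrightarrow> 0 \<le> t * x l + (1 - t) * y l" using x y t by auto
  show "(\<Sum>i<k. t * x i + (1 - t) * y i) = 1" using x y
    by (simp add: sum.distrib sum_distrib_left[symmetric])
  fix g assume "g \<in> G"
  then show "dotk k g (\<lambda>i. t * x i + (1 - t) * y i) = 0" using x y
    by (simp add: dotk_comb)
qed

lemma cvx_image:
  assumes "cvx C"
    and lin: "\<And>a b t. \<phi> (\<lambda>l. t * a l + (1-t) * b l) = (\<lambda>i. t * \<phi> a i + (1-t) * \<phi> b i)"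
  shows "cvx (\<phi> ` C)"
  unfolding cvx_def
proof (intro ballI allI impI)
  fix x y and t :: real assume "x \<in> \<phi> ` C" "y \<in> \<phi> ` C" "0 \<le> t \<and> t \<le> 1"
  then obtain a b where ab: "a \<in> C" "b \<in> C" "x = \<phi> a" "y = \<phi> b" by auto
  have "(\<lambda>l. t * a l + (1-t) * b l) \<in> C" using assms(1) ab \<open>0 \<le> t \<and> t \<le> 1\<close>
    unfolding cvx_def by auto
  then have "\<phi> (\<lambda>l. t * a l + (1-t) * b l) \<in> \<phi> ` C" by (rule imageI)
  then show "(\<lambda>i. t * x i + (1 - t) * y i) \<in> \<phi> ` C" unfolding lin ab(3,4) .
qed

lemma cvx_Int: "cvx C \<Longrightarrow> cvx D \<Longrightarrow> cvx (C \<inter> D)"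
  unfolding cvx_def by blast





theorem proposition1:
  fixes n m r :: nat and A :: "nat \<Rightarrow> nat \<Rightarrow> real"
  assumes "nonneg_mat n m A"
    and "col_stochastic n m A"
    and "nnrank n m A \<le> r"
  shows "\<exists>P. polytope n P \<and> P_in n m A \<subseteq> P \<and> P \<subseteq> P_out n m A \<and> ic n P \<le> r"
proof -
  define k where "k = nnrank n m A"
  have ex: "\<exists>(k::nat) B. (\<forall>l<k. nonneg_mat n m (B l) \<and> rank_one n m (B l))
      \<and> (\<forall>i<n. \<forall>j<m. A i j = (\<Sum>l<k. B l i j))" using decomp_exists[OF assms(1)] .
  have "\<exists>B :: nat \<Rightarrow> nat \<Rightarrow> nat \<Rightarrow> real. (\<forall>l<k. nonneg_mat n m (B l) \<and> rank_one n m (B l))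
      \<and> (\<forall>i<n. \<forall>j<m. A i j = (\<Sum>l<k. B l i j))"
    unfolding k_def nnrank_def by (rule LeastI_ex) (use ex in blast)
  then obtain B :: "nat \<Rightarrow> nat \<Rightarrow> nat \<Rightarrow> real" where
    Bnn: "\<forall>l<k. nonneg_mat n m (B l)" and Br1: "\<forall>l<k. rank_one n m (B l)"
    and AB: "\<forall>i<n. \<forall>j<m. A i j = (\<Sum>l<k. B l i j)" by blast
  have kr: "k \<le> r" using assms(3) k_def by simp
  have "\<forall>l\<in>{..<k}. \<exists>u v. (\<exists>i<n. u i \<noteq> 0) \<and> (\<exists>j<m. v j \<noteq> 0)
                          \<and> (\<forall>i<n. \<forall>j<m. B l i j = u i * v j)"
    using Br1 unfolding rank_one_def by blast
  then obtain uu vv where uv: "\<forall>l\<in>{..<k}. (\<exists>i<n. uu l i \<noteq> (0::real)) \<and> (\<exists>j<m. vv l j \<noteq> (0::real))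
                          \<and> (\<forall>i<n. \<forall>j<m. B l i j = uu l i * vv l j)"
    by metis
  define s where "s l = (\<Sum>i<n. \<bar>uu l i\<bar>)" for l
  define U where "U l i = \<bar>uu l i\<bar> / s l" for l i
  define V where "V l j = s l * \<bar>vv l j\<bar>" for l j
  have spos: "l < k \<Longrightarrow> s l > 0" for l
  proof -
    assume l: "l < k"
    then have "l \<in> {..<k}" by simp
    then obtain i where "i < n" "uu l i \<noteq> 0" using uv by blast
    then show "s l > 0" unfolding s_def by (intro sum_pos2[of _ i]) auto
  qed
  have Babs: "B l i j = \<bar>uu l i\<bar> * \<bar>vv l j\<bar>" if "l < k" "i < n" "j < m" for l i j
  proof -
    have "l \<in> {..<k}" using that by simp
    then have "B l i j = uu l i * vv l j" using uv that by blast
    moreover have "B l i j \<ge> 0" using Bnn that unfolding nonneg_mat_def by auto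
    ultimately show ?thesis by (simp add: abs_mult[symmetric])
  qed
  have AUV: "A i j = (\<Sum>l<k. U l i * V l j)" if "i < n" "j < m" for i j
  proof -
    have "A i j = (\<Sum>l<k. B l i j)" using AB that by auto
    also have "\<dots> = (\<Sum>l<k. U l i * V l j)"
      using spos Babs that unfolding U_def V_def by (intro sum.cong) (auto dest!: spos)
    finally show ?thesis .
  qed
  have Unn: "0 \<le> U l i" if "l < k" for l i unfolding U_def using spos[OF that] by simp
  have Vnn: "0 \<le> V l j" if "l < k" for l j unfolding V_def using spos[OF that] by simp
  have Usum: "(\<Sum>i<n. U l i) = 1" if "l < k" for l
    unfolding U_def using spos[OF that] by (simp add: sum_divide_distrib[symmetric] s_def)
  have Vsum: "(\<Sum>l<k. V l j) = 1" if "j < m" for j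
  proof -
    have "1 = (\<Sum>i<n. A i j)" using assms(2) that unfolding col_stochastic_def by simp
    also have "\<dots> = (\<Sum>i<n. \<Sum>l<k. U l i * V l j)" using AUV that by simp
    also have "\<dots> = (\<Sum>l<k. V l j * (\<Sum>i<n. U l i))"
      by (subst sum.swap) (simp add: sum_distrib_left mult.commute)
    also have "\<dots> = (\<Sum>l<k. V l j)" using Usum by simp
    finally show ?thesis by simp
  qed
  define vc where "vc j = (\<lambda>l. if l < k then V l j else 0)" for j
  have vce: "\<forall>j. vc j \<in> euc k" unfolding vc_def euc_def by auto
  obtain ws where ws: "\<forall>y\<in>euc k. (\<forall>w\<in>set ws. dotk k w y = 0) \<longleftrightarrow>
            (\<exists>c. y = (\<lambda>l. \<Sum>j<m. c j * vc j l))"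
    using kernel_exists[OF vce, of m] by blast
  define N where "N = n + length ws"
  define lift where "lift y = (\<lambda>i. if i < n then (\<Sum>l<k. y l * U l i)
       else if i < N then dotk k (ws ! (i - n)) y else 0)" for y
  define e where "e l = (\<lambda>l'::nat. if l' = l then (1::real) else 0)" for l :: nat
  define Q where "Q = convhull ((\<lambda>l. lift (e l)) ` {..<k})"
  define P where "P = Q \<inter> {x \<in> euc N. \<forall>i. n \<le> i \<and> i < N \<longrightarrow> x i = 0}"
  define F where "F = Fset k (set ws)"
  have lift_lin: "lift (\<lambda>l. t * a l + (1-t) * b l) = (\<lambda>i. t * lift a i + (1-t) * lift b i)" for t a b
  proof
    fix i
    have "(\<Sum>l<k. (t * a l + (1-t) * b l) * U l i) = t * (\<Sum>l<k. a l * U l i) + (1-t) * (\<Sum>l<k. b l * U l i)"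
    proof -
      have "(\<Sum>l<k. (t * a l + (1-t) * b l) * U l i) = (\<Sum>l<k. t * (a l * U l i) + (1-t) * (b l * U l i))"
        by (intro sum.cong) (auto simp: algebra_simps)
      then show ?thesis by (simp add: sum.distrib sum_distrib_left)
    qed
    then show "lift (\<lambda>l. t * a l + (1-t) * b l) i = t * lift a i + (1-t) * lift b i"
      unfolding lift_def by (simp add: dotk_comb)
  qed
  have lift_euc: "lift y \<in> euc N" for y unfolding lift_def euc_def N_def by auto
  have lift_e: "lift y = (\<lambda>i. \<Sum>l<k. y l * lift (e l) i)" if y: "y \<in> euc k" for y
  proof
    fix i
    have inner: "(\<Sum>l'<k. e l l' * U l' i) = U l i" if "l < k" for l
      unfolding e_def using that by (simp add: if_distrib[of "\<lambda>c. c * _"] cong: if_cong)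
    have innerd: "dotk k w (e l) = w l" if "l < k" for w l
      unfolding e_def dotk_def using that by (simp add: if_distrib[of "\<lambda>c. _ * c"] cong: if_cong)
    show "lift y i = (\<Sum>l<k. y l * lift (e l) i)"
    proof (cases "i < n")
      case True
      then show ?thesis unfolding lift_def using inner by (auto intro!: sum.cong)
    next
      case False
      show ?thesis
      proof (cases "i < N")
        case True
        have "lift y i = (\<Sum>l<k. (ws ! (i - n)) l * y l)" unfolding lift_def dotk_def using False True by simp
        also have "\<dots> = (\<Sum>l<k. y l * dotk k (ws ! (i - n)) (e l))"
          using innerd by (intro sum.cong) (auto simp: mult.commute)
        also have "\<dots> = (\<Sum>l<k. y l * lift (e l) i)" unfolding lift_def using False True by simp
        finally show ?thesis .
      next
        case False2: False
        then show ?thesis unfolding lift_def using False by simp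
      qed
    qed
  qed
  have fin_E: "finite ((\<lambda>l. lift (e l)) ` {..<k})" by simp
  have e_D: "e l \<in> Fset k {}" if "l < k" for l
    unfolding Fset_def e_def euc_def using that by auto
  have cvxQ: "cvx Q" unfolding Q_def by (rule cvx_convhull)
  have cvxD: "cvx (lift ` Fset k {})" by (rule cvx_image[OF cvx_Fset lift_lin])
  have Qeq: "Q = lift ` Fset k {}"
  proof
    show "Q \<subseteq> lift ` Fset k {}" unfolding Q_def
      by (rule convhull_subset[OF cvxD fin_E]) (use e_D in auto)
    show "lift ` Fset k {} \<subseteq> Q"
    proof
      fix x assume "x \<in> lift ` Fset k {}"
      then obtain y where y: "y \<in> Fset k {}" "x = lift y" by auto
      have "(\<lambda>i. \<Sum>l\<in>{..<k}. y l * lift (e l) i) \<in> Q"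
        by (rule cvx_sum[OF cvxQ]) (use y convhull_sup[OF fin_E] in \<open>auto simp: Fset_def Q_def\<close>)
      then show "x \<in> Q" using lift_e[of y] y unfolding Fset_def by auto
    qed
  qed
  have liftH: "lift y \<in> {x \<in> euc N. \<forall>i. n \<le> i \<and> i < N \<longrightarrow> x i = 0} \<longleftrightarrow>
      (\<forall>w\<in>set ws. dotk k w y = 0)" for y
  proof -
    have "lift y \<in> {x \<in> euc N. \<forall>i. n \<le> i \<and> i < N \<longrightarrow> x i = 0} \<longleftrightarrow>
       (\<forall>i. n \<le> i \<and> i < N \<longrightarrow> dotk k (ws ! (i - n)) y = 0)"
      using lift_euc[of y] unfolding lift_def by auto
    also have "\<dots> \<longleftrightarrow> (\<forall>i'<length ws. dotk k (ws ! i') y = 0)"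
    proof
      assume h: "\<forall>i. n \<le> i \<and> i < N \<longrightarrow> dotk k (ws ! (i - n)) y = 0"
      show "\<forall>i'<length ws. dotk k (ws ! i') y = 0"
      proof (intro allI impI)
        fix i' assume "i' < length ws"
        then show "dotk k (ws ! i') y = 0" using h[rule_format, of "n + i'"] unfolding N_def by simp
      qed
    next
      assume "\<forall>i'<length ws. dotk k (ws ! i') y = 0"
      then show "\<forall>i. n \<le> i \<and> i < N \<longrightarrow> dotk k (ws ! (i - n)) y = 0" unfolding N_def by auto
    qed
    also have "\<dots> \<longleftrightarrow> (\<forall>w\<in>set ws. dotk k w y = 0)" by (simp add: all_set_conv_all_nth)
    finally show ?thesis .
  qed
  have Peq: "P = lift ` F"
  proof -
    have "P = lift ` Fset k {} \<inter> {x \<in> euc N. \<forall>i. n \<le> i \<and> i < N \<longrightarrow> x i = 0}"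
      unfolding P_def Qeq ..
    also have "\<dots> = lift ` F"
    proof
      show "lift ` Fset k {} \<inter> {x \<in> euc N. \<forall>i. n \<le> i \<and> i < N \<longrightarrow> x i = 0} \<subseteq> lift ` F"
        using liftH unfolding F_def Fset_def by auto
      show "lift ` F \<subseteq> lift ` Fset k {} \<inter> {x \<in> euc N. \<forall>i. n \<le> i \<and> i < N \<longrightarrow> x i = 0}"
        using liftH unfolding F_def Fset_def by auto
    qed
    finally show ?thesis .
  qed
  have cvxP: "cvx P" unfolding Peq F_def by (rule cvx_image[OF cvx_Fset lift_lin])
  have PeucN: "lift y \<in> euc n" if "y \<in> F" for y
  proof -
    have "\<forall>w\<in>set ws. dotk k w y = 0" using that unfolding F_def Fset_def by auto
    then have "\<forall>i<length ws. dotk k (ws ! i) y = 0" by (simp add: all_set_conv_all_nth)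
    then show ?thesis unfolding euc_def lift_def N_def by auto
  qed
  have vcF: "vc j \<in> F" if j: "j < m" for j
    unfolding F_def Fset_def
  proof (intro CollectI conjI allI impI ballI)
    show "vc j \<in> euc k" using vce by simp
    show "\<And>l. l < k \<Longrightarrow> 0 \<le> vc j l" unfolding vc_def using Vnn by simp
    show "sum (vc j) {..<k} = 1" unfolding vc_def using Vsum[OF j] by simp
    fix w assume w: "w \<in> set ws"
    have "vc j = (\<lambda>l. \<Sum>j'<m. (if j' = j then 1 else 0) * vc j' l)"
      using j by (simp add: if_distrib[of "\<lambda>c. c * _"] cong: if_cong)
    then have "\<exists>c. vc j = (\<lambda>l. \<Sum>j<m. c j * vc j l)"
      by (intro exI[of _ "\<lambda>j'. if j' = j then (1::real) else 0"])
    then show "dotk k w (vc j) = 0" using ws vce w by blast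
  qed
  have col_lift: "column n A j = lift (vc j)" if j: "j < m" for j
  proof
    fix i
    have d0: "\<forall>w\<in>set ws. dotk k w (vc j) = 0" using vcF[OF j] unfolding F_def Fset_def by auto
    show "column n A j i = lift (vc j) i"
    proof (cases "i < n")
      case True
      then show ?thesis unfolding column_def lift_def vc_def using AUV[OF True j]
        by (auto simp: mult.commute intro!: sum.cong)
    next
      case False
      then show ?thesis unfolding column_def lift_def using d0 by (auto simp: N_def)
    qed
  qed
  have Pin: "P_in n m A \<subseteq> P" unfolding P_in_def
    by (rule convhull_subset[OF cvxP]) (use col_lift vcF Peq in auto)
  have Pout: "P \<subseteq> P_out n m A"
  proof
    fix x assume "x \<in> P"
    then obtain y where y: "y \<in> F" and xy: "x = lift y" unfolding Peq by auto
    have ye: "y \<in> euc k" and ynn: "\<forall>l<k. 0 \<le> y l" and ys: "(\<Sum>l<k. y l) = 1"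
      and yw: "\<forall>w\<in>set ws. dotk k w y = 0"
      using y unfolding F_def Fset_def by auto
    have xe: "x \<in> euc n" using PeucN[OF y] xy by simp
    have xi: "x i = (\<Sum>l<k. y l * U l i)" if "i < n" for i unfolding xy lift_def using that by simp
    have "x \<in> simplex n" unfolding simplex_def
    proof (intro CollectI conjI allI impI)
      show "x \<in> euc n" by (rule xe)
      show "\<And>i. i < n \<Longrightarrow> 0 \<le> x i" using xi ynn Unn by (auto intro!: sum_nonneg)
      have "(\<Sum>i<n. x i) = (\<Sum>i<n. \<Sum>l<k. y l * U l i)" using xi by simp
      also have "\<dots> = (\<Sum>l<k. y l * (\<Sum>i<n. U l i))"
        by (subst sum.swap) (simp add: sum_distrib_left)
      also have "\<dots> = 1" using Usum ys by simp
      finally show "(\<Sum>i<n. x i) = 1" .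
    qed
    moreover have "x \<in> colspace n m A"
    proof -
      obtain c where c: "y = (\<lambda>l. \<Sum>j<m. c j * vc j l)" using ws ye yw by blast
      have "x = (\<lambda>i. \<Sum>j<m. c j * column n A j i)"
      proof
        fix i
        show "x i = (\<Sum>j<m. c j * column n A j i)"
        proof (cases "i < n")
          case True
          have "x i = (\<Sum>l<k. (\<Sum>j<m. c j * V l j) * U l i)"
            unfolding xi[OF True] by (intro sum.cong) (auto simp: c vc_def)
          also have "\<dots> = (\<Sum>j<m. c j * (\<Sum>l<k. U l i * V l j))"
            by (simp add: sum_distrib_left sum_distrib_right mult.commute mult.left_commute)
              (rule sum.swap)
          also have "\<dots> = (\<Sum>j<m. c j * column n A j i)"
            using AUV True unfolding column_def by simp
          finally show ?thesis .
        next
          case False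
          then show ?thesis using xe unfolding euc_def column_def by simp
        qed
      qed
      then show ?thesis unfolding colspace_def by blast
    qed
    ultimately show "x \<in> P_out n m A" unfolding P_out_def by simp
  qed
  have polyP: "polytope n P" unfolding polytope_def
  proof (intro exI[of _ "lift ` Bset k (set ws)"] conjI)
    show "finite (lift ` Bset k (set ws))" using finite_Bset by simp
    have BF: "Bset k (set ws) \<subseteq> F" unfolding Bset_def F_def by auto
    show "lift ` Bset k (set ws) \<subseteq> euc n" using BF PeucN by auto
    show "P = convhull (lift ` Bset k (set ws))"
    proof
      show "P \<subseteq> convhull (lift ` Bset k (set ws))"
      proof
        fix x assume "x \<in> P"
        then obtain y where y: "y \<in> F" and xy: "x = lift y" unfolding Peq by auto
        have "lift y \<in> convhull (lift ` Bset k (set ws))"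
          by (rule lp_main[OF cvx_convhull _ lift_lin]) (use convhull_sup finite_Bset y F_def in auto)
        then show "x \<in> convhull (lift ` Bset k (set ws))" using xy by simp
      qed
      show "convhull (lift ` Bset k (set ws)) \<subseteq> P"
        by (rule convhull_subset[OF cvxP]) (use finite_Bset BF Peq in auto)
    qed
  qed
  have icP: "ic n P \<le> r"
  proof -
    have polyQ: "polytope N Q" unfolding polytope_def Q_def
      using fin_E lift_euc by blast
    have sl: "is_slice n P N Q" unfolding is_slice_def P_def N_def by simp
    have "ic n P \<le> card (vertices Q)" unfolding ic_def
      by (rule Least_le) (use polyQ sl in blast)
    also have "\<dots> \<le> card ((\<lambda>l. lift (e l)) ` {..<k})"
      unfolding Q_def by (rule card_mono[OF fin_E vertices_convhull[OF fin_E]])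
    also have "\<dots> \<le> k" using card_image_le[of "{..<k}" "\<lambda>l. lift (e l)"] by simp
    finally show ?thesis using kr by simp
  qed
  show ?thesis using polyP Pin Pout icP by blast
qed


end
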